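(* Let $T\in\mathbb{C}^{l\times l}$ and let $\lambda_1,\dots,\lambda_k$ be $k$ distinct eigenvalues of $T$. Then for every $\gamma=(\gamma_{ij})_{1\le i<j\le k}$ with $\gamma_{ij}\in\mathbb{C}$, one has $\operatorname{rank}(Q_T(\gamma))\le kl-k$, equivalently $s_{kl-(k-1)}(Q_T(\gamma))=0$.
   Context: For $T\in\mathbb{C}^{l\times l}$, scalars $\lambda_1,\dots,\lambda_k\in\mathbb{C}$ and $\gamma=(\gamma_{ij})_{1\le i<j\le k}\in\mathbb{C}^{k(k-1)/2}$, $Q_T(\gamma)\in\mathbb{C}^{kl\times kl}$ is the $k\times k$ block upper triangular matrix whose $(i,i)$ block is $T-\lambda_i I_l$, whose $(i,j)$ block for $i<j$ is $\gamma_{ij}I_l$, and whose blocks below the diagonal are zero. $s_j(\cdot)$ denotes the $j$-th largest singular value. *)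

theory Defs
  imports "Jordan_Normal_Form.Char_Poly" "Jordan_Normal_Form.DL_Rank"
begin

text \<open>Blocks are indexed 0..k-1.\<close>
definition Q_mat :: "nat \<Rightarrow> nat \<Rightarrow> complex mat \<Rightarrow> (nat \<Rightarrow> complex) \<Rightarrow> (nat \<Rightarrow> nat \<Rightarrow> complex) \<Rightarrow> complex mat" where
  "Q_mat k l T lam gam = mat (k * l) (k * l) (\<lambda>(r, c).
     (let i = r div l; j = c div l; a = r mod l; b = c mod l in
      if i = j then T $$ (a, b) - (if a = b then lam i else 0)
      else if i < j then (if a = b then gam i j else 0)
      else 0))"

end

theory Submission
  imports Defs "Jordan_Normal_Form.Matrix_Kernel"
begin


lemma rank_nullity_mat:
  fixes A :: "'a::field mat"
  assumes A: "A \<in> carrier_mat n nc"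
  shows "vec_space.rank n A + kernel_dim A = nc"
proof -
  interpret NC: vec_space "TYPE('a)" nc .
  interpret NR: vec_space "TYPE('a)" n .
  interpret K: kernel n nc A by (unfold_locales, rule A)
  interpret LM: linear_map class_ring "module_vec TYPE('a) nc" "module_vec TYPE('a) n" "\<lambda>v. A *\<^sub>v v"
  proof (unfold_locales)
    show "(*\<^sub>v) A \<in> module_hom class_ring (module_vec TYPE('a) nc) (module_vec TYPE('a) n)"
      unfolding module_hom_def using A
      by (auto simp: module_vec_simps class_ring_simps mult_add_distrib_mat_vec mult_mat_vec)
  qed
  have im: "LM.imT = NR.span (set (cols A))"
    unfolding NR.col_space_def[symmetric] NR.col_space_eq[OF A] LM.im_def
    using A by (auto simp: module_vec_simps)
  have ker: "LM.kerT = mat_kernel A"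
    unfolding LM.ker_def mat_kernel_def using A by (auto simp: module_vec_simps)
  note rn = LM.rank_nullity_main(1)[OF NC.fin_dim]
  then show ?thesis unfolding NR.rank_def K.kernel_dim NC.dim_is_n im ker by simp
qed

lemma kernel_dim_ge:
  fixes A :: "'a::field mat"
  assumes A: "A \<in> carrier_mat n nc" and W: "W \<in> carrier_mat nc k"
    and dist: "distinct (cols W)" and sub: "set (cols W) \<subseteq> mat_kernel A"
    and inj: "\<And>x. x \<in> carrier_vec k \<Longrightarrow> W *\<^sub>v x = 0\<^sub>v nc \<Longrightarrow> x = 0\<^sub>v k"
  shows "k \<le> kernel_dim A"
proof -
  interpret NC: vec_space "TYPE('a)" nc .
  interpret K: kernel n nc A by (unfold_locales, rule A)
  have li: "NC.lin_indpt (set (cols W))"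
  proof
    assume "NC.lin_dep (set (cols W))"
    then obtain v where "v \<in> carrier_vec k" "v \<noteq> 0\<^sub>v k" "W *\<^sub>v v = 0\<^sub>v nc"
      using NC.lin_depE[OF W _ dist] by blast
    then show False using inj by blast
  qed
  then have li2: "K.lin_indpt (set (cols W))" using K.lindep_same[OF sub] by simp
  obtain B where "finite B" "K.basis B" using kernel_basis_exists[OF A] by blast
  then have fd: "K.Ker.fin_dim" unfolding K.Ker.fin_dim_def K.Ker.basis_def by blast
  have "card (set (cols W)) \<le> K.dim" using K.Ker.li_le_dim(2)[OF fd sub li2] .
  moreover have "card (set (cols W)) = k" using distinct_card[OF dist] W by simp
  ultimately show ?thesis using K.kernel_dim by simp
qed


lemma coef_exists:
  fixes lam :: "nat \<Rightarrow> complex" and gam :: "nat \<Rightarrow> nat \<Rightarrow> complex"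
  assumes inj: "inj_on lam {..<k}" and m: "m < k"
  shows "\<exists>c. c m = 1 \<and> (\<forall>i. m < i \<longrightarrow> c i = 0) \<and>
     (\<forall>i<k. c i * (lam m - lam i) + (\<Sum>j\<in>{i<..<k}. gam i j * c j) = 0)"
proof -
  have "\<forall>d. d \<le> m \<longrightarrow> (\<exists>c. c m = 1 \<and> (\<forall>i. m < i \<longrightarrow> c i = 0) \<and>
     (\<forall>i<k. m - d \<le> i \<longrightarrow> c i * (lam m - lam i) + (\<Sum>j\<in>{i<..<k}. gam i j * c j) = 0))"
  proof (intro allI)
    fix d show "d \<le> m \<longrightarrow> (\<exists>c. c m = 1 \<and> (\<forall>i. m < i \<longrightarrow> c i = 0) \<and>
     (\<forall>i<k. m - d \<le> i \<longrightarrow> c i * (lam m - lam i) + (\<Sum>j\<in>{i<..<k}. gam i j * c j) = 0))"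
    proof (induction d)
      case 0
      show ?case
      proof (intro impI exI[of _ "\<lambda>i. if i = m then 1 else 0"] conjI allI)
        fix i assume "i < k" "m - 0 \<le> i"
        then show "(if i = m then 1 else 0) * (lam m - lam i) +
          (\<Sum>j\<in>{i<..<k}. gam i j * (if j = m then 1 else 0)) = (0::complex)"
          by (auto intro!: sum.neutral)
      qed auto
    next
      case (Suc d)
      show ?case
      proof
        assume dm: "Suc d \<le> m"
        then obtain c where c1: "c m = 1" and c2: "\<forall>i. m < i \<longrightarrow> c i = 0"
          and c3: "\<forall>i<k. m - d \<le> i \<longrightarrow> c i * (lam m - lam i) + (\<Sum>j\<in>{i<..<k}. gam i j * c j) = 0"
          using Suc.IH by auto
        define i0 where "i0 = m - Suc d"
        have i0m: "i0 < m" using dm unfolding i0_def by simp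
        have ne: "lam m - lam i0 \<noteq> 0" using inj i0m m by (auto dest: inj_onD)
        define c' where "c' = c(i0 := - (\<Sum>j\<in>{i0<..<k}. gam i0 j * c j) / (lam m - lam i0))"
        show "\<exists>c. c m = 1 \<and> (\<forall>i. m < i \<longrightarrow> c i = 0) \<and>
          (\<forall>i<k. m - Suc d \<le> i \<longrightarrow> c i * (lam m - lam i) + (\<Sum>j\<in>{i<..<k}. gam i j * c j) = 0)"
        proof (intro exI[of _ c'] conjI allI impI)
          show "c' m = 1" using c1 i0m by (simp add: c'_def)
          fix i
          show "m < i \<Longrightarrow> c' i = 0" using c2 i0m by (simp add: c'_def)
          assume ik: "i < k" and id: "m - Suc d \<le> i"
          have sums: "\<And>i. i0 \<le> i \<Longrightarrow> (\<Sum>j\<in>{i<..<k}. gam i j * c' j) = (\<Sum>j\<in>{i<..<k}. gam i j * c j)"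
            by (rule sum.cong) (auto simp: c'_def)
          show "c' i * (lam m - lam i) + (\<Sum>j\<in>{i<..<k}. gam i j * c' j) = 0"
          proof (cases "i = i0")
            case True
            then show ?thesis using ne sums[of i0] by (simp add: c'_def field_simps)
          next
            case False
            then have "m - d \<le> i" "i0 \<le> i" using id i0_def by auto
            then show ?thesis using c3 ik sums[of i] False by (simp add: c'_def)
          qed
        qed
      qed
    qed
  qed
  from this[rule_format, of m] show ?thesis by auto
qed

lemma sum_blocks:
  fixes f :: "nat \<Rightarrow> 'a::comm_monoid_add"
  shows "(\<Sum>c<k*l. f c) = (\<Sum>j<k. \<Sum>b<l. f (j*l+b))"
proof (induction k)
  case 0 then show ?case by simp
next
  case (Suc k)
  have "(\<Sum>c<Suc k*l. f c) = (\<Sum>c<k*l. f c) + (\<Sum>c\<in>{k*l..<k*l+l}. f c)"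
    by (simp add: add.commute sum.atLeastLessThan_concat[symmetric] lessThan_atLeast0)
  also have "(\<Sum>c\<in>{k*l..<k*l+l}. f c) = (\<Sum>b<l. f (k*l+b))"
  proof -
    have "(\<Sum>c\<in>{0+k*l..<l+k*l}. f c) = (\<Sum>b\<in>{0..<l}. f (b+k*l))"
      by (rule sum.shift_bounds_nat_ivl)
    then show ?thesis by (simp add: lessThan_atLeast0 ac_simps)
  qed
  finally show ?case using Suc by simp
qed


lemma sum_split_at:
  fixes A :: "'a::comm_monoid_add"
  assumes "i < (k::nat)"
  shows "(\<Sum>j<k. if j = i then A else if i < j then B j else 0) = A + (\<Sum>j\<in>{i<..<k}. B j)"
proof -
  have "(\<Sum>j<k. if j = i then A else if i < j then B j else 0) =
        (\<Sum>j<k. (if j = i then A else 0) + (if i < j then B j else 0))"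
    by (rule sum.cong) (simp_all)
  also have "\<dots> = A + (\<Sum>j<k. if i < j then B j else 0)"
    using assms by (simp add: sum.distrib)
  also have "(\<Sum>j<k. if i < j then B j else 0) = (\<Sum>j\<in>{..<k} \<inter> {j. i < j}. B j)"
    by (simp add: sum.inter_restrict)
  also have "{..<k} \<inter> {j. i < j} = {i<..<k}" by auto
  finally show ?thesis .
qed

lemma idx_lt: assumes "i < (k::nat)" "a < l" shows "i*l+a < k*l"
proof -
  have "i*l + a < i*l + l" using assms by simp
  also have "\<dots> = Suc i * l" by simp
  also have "\<dots> \<le> k*l" using assms by (intro mult_le_mono1) simp
  finally show ?thesis .
qed

lemma Q_carrier: "Q_mat k l T lam gam \<in> carrier_mat (k*l) (k*l)"
  unfolding Q_mat_def by simp

lemma Q_entry: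
  assumes "i < k" "a < l" "j < k" "b < l"
  shows "Q_mat k l T lam gam $$ (i*l+a, j*l+b) =
    (if i = j then T $$ (a, b) - (if a = b then lam i else 0)
      else if i < j then (if a = b then gam i j else 0) else 0)"
proof -
  have "i*l+a < k*l" "j*l+b < k*l" using assms by (simp_all add: idx_lt)
  then show ?thesis unfolding Q_mat_def using assms by simp
qed

lemma inner_sum:
  fixes T :: "complex mat"
  assumes T: "T \<in> carrier_mat l l" and i: "i < k" and a: "a < l" and j: "j < k"
    and v: "v \<in> carrier_vec l" and ev: "T *\<^sub>v v = mu \<cdot>\<^sub>v v"
  shows "(\<Sum>b<l. Q_mat k l T lam gam $$ (i*l+a, j*l+b) * (cc * v $ b)) =
    (if j = i then cc * (mu - lam i) * v $ a else if i < j then gam i j * cc * v $ a else 0)"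
proof -
  have "(\<Sum>b<l. Q_mat k l T lam gam $$ (i*l+a, j*l+b) * (cc * v $ b)) =
    (\<Sum>b<l. (if i = j then T $$ (a, b) - (if a = b then lam i else 0)
      else if i < j then (if a = b then gam i j else 0) else 0) * (cc * v $ b))"
    by (rule sum.cong) (use i a j in \<open>simp_all add: Q_entry\<close>)
  also have "\<dots> = (if j = i then cc * (mu - lam i) * v $ a else if i < j then gam i j * cc * v $ a else 0)"
  proof (cases "i = j")
    case True
    have "(T *\<^sub>v v) $ a = (\<Sum>b<l. T $$ (a, b) * v $ b)"
      using T v a by (simp add: mult_mat_vec_def scalar_prod_def lessThan_atLeast0)
    then have tv: "(\<Sum>b<l. T $$ (a, b) * v $ b) = mu * v $ a" using ev v a by simp
    have "(\<Sum>b<l. (T $$ (a, b) - (if a = b then lam i else 0)) * (cc * v $ b)) =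
          (\<Sum>b<l. cc * (T $$ (a, b) * v $ b)) - (\<Sum>b<l. if a = b then lam i * cc * v $ b else 0)"
      unfolding sum_subtractf[symmetric] by (rule sum.cong) (auto simp: algebra_simps)
    also have "\<dots> = cc * (mu * v $ a) - lam i * cc * v $ a"
      using a by (simp add: sum_distrib_left[symmetric] tv)
    finally show ?thesis using True by (simp add: algebra_simps)
  next
    case False
    have "(\<Sum>b<l. (if i = j then T $$ (a, b) - (if a = b then lam i else 0)
      else if i < j then (if a = b then gam i j else 0) else 0) * (cc * v $ b)) =
      (\<Sum>b<l. if a = b then (if i < j then gam i j * cc * v $ b else 0) else 0)"
      by (rule sum.cong) (use False in auto)
    also have "\<dots> = (if i < j then gam i j * cc * v $ a else 0)"
      using a by (simp add: sum.delta)
    finally show ?thesis using False by simp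
  qed
  finally show ?thesis .
qed

theorem mainTheorem2:
  fixes T :: "complex mat" and l k :: nat
    and lam :: "nat \<Rightarrow> complex" and gam :: "nat \<Rightarrow> nat \<Rightarrow> complex"
  assumes "T \<in> carrier_mat l l"
    and "inj_on lam {..<k}"
    and "\<forall>i<k. eigenvalue T (lam i)"
  shows "vec_space.rank (k * l) (Q_mat k l T lam gam) \<le> k * l - k"
proof -
  note T = assms(1)
  define Q where "Q = Q_mat k l T lam gam"
  have Qc: "Q \<in> carrier_mat (k*l) (k*l)" unfolding Q_def by (rule Q_carrier)
  have "\<forall>m<k. \<exists>v. v \<in> carrier_vec l \<and> v \<noteq> 0\<^sub>v l \<and> T *\<^sub>v v = lam m \<cdot>\<^sub>v v"
    using assms(3) T unfolding eigenvalue_def eigenvector_def by auto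
  then obtain v where v: "\<And>m. m < k \<Longrightarrow> v m \<in> carrier_vec l \<and> v m \<noteq> 0\<^sub>v l \<and> T *\<^sub>v v m = lam m \<cdot>\<^sub>v v m"
    by metis
  have "\<forall>m<k. \<exists>p<l. v m $ p \<noteq> 0"
  proof (intro allI impI, rule ccontr)
    fix m assume m: "m < k" and "\<not> (\<exists>p<l. v m $ p \<noteq> 0)"
    then have "v m = 0\<^sub>v l" using v[OF m] by (intro eq_vecI) auto
    then show False using v[OF m] by simp
  qed
  then obtain p where p: "\<And>m. m < k \<Longrightarrow> p m < l \<and> v m $ p m \<noteq> 0" by metis
  have "\<forall>m<k. \<exists>c. c m = 1 \<and> (\<forall>i. m < i \<longrightarrow> c i = 0) \<and>
     (\<forall>i<k. c i * (lam m - lam i) + (\<Sum>j\<in>{i<..<k}. gam i j * c j) = 0)"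
    using coef_exists[OF assms(2)] by blast
  then obtain C where C1: "\<And>m. m < k \<Longrightarrow> C m m = 1"
    and C2: "\<And>m i. m < k \<Longrightarrow> m < i \<Longrightarrow> C m i = 0"
    and C3: "\<And>m i. m < k \<Longrightarrow> i < k \<Longrightarrow> C m i * (lam m - lam i) + (\<Sum>j\<in>{i<..<k}. gam i j * C m j) = 0"
    by metis
  define W where "W = mat (k*l) k (\<lambda>(r,m). C m (r div l) * v m $ (r mod l))"
  have Wc: "W \<in> carrier_mat (k*l) k" unfolding W_def by simp
  have Wentry: "W $$ (i*l+a, m) = C m i * v m $ a" if "i < k" "a < l" "m < k" for i a m
    using that idx_lt[OF that(1,2)] unfolding W_def by simp
  have ker: "Q *\<^sub>v col W m = 0\<^sub>v (k*l)" if m: "m < k" for m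
  proof (rule eq_vecI)
    show "dim_vec (Q *\<^sub>v col W m) = dim_vec (0\<^sub>v (k*l))" using Qc by simp
    fix r assume "r < dim_vec (0\<^sub>v (k*l))"
    then have r: "r < k*l" by simp
    then have l0: "0 < l" by (cases l) auto
    define i where "i = r div l"
    define a where "a = r mod l"
    have ri: "r = i*l+a" unfolding i_def a_def by simp
    have i: "i < k" using r unfolding i_def by (simp add: less_mult_imp_div_less)
    have a: "a < l" unfolding a_def using l0 by simp
    have "(Q *\<^sub>v col W m) $ r = (\<Sum>c<k*l. Q $$ (r, c) * col W m $ c)"
      using Qc Wc r m by (simp add: mult_mat_vec_def scalar_prod_def lessThan_atLeast0)
    also have "\<dots> = (\<Sum>j<k. \<Sum>b<l. Q $$ (i*l+a, j*l+b) * col W m $ (j*l+b))"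
      unfolding sum_blocks ri ..
    also have "\<dots> = (\<Sum>j<k. \<Sum>b<l. Q $$ (i*l+a, j*l+b) * (C m j * v m $ b))"
      using Wc m idx_lt by (intro sum.cong refl) (simp add: Wentry)
    also have "\<dots> = (\<Sum>j<k. if j = i then C m i * (lam m - lam i) * v m $ a
        else if i < j then gam i j * C m j * v m $ a else 0)"
    proof (rule sum.cong[OF refl])
      fix j assume "j \<in> {..<k}"
      then have j: "j < k" by simp
      from v[OF m] have vc: "v m \<in> carrier_vec l" and ev: "T *\<^sub>v v m = lam m \<cdot>\<^sub>v v m" by auto
      show "(\<Sum>b<l. Q $$ (i*l+a, j*l+b) * (C m j * v m $ b)) = (if j = i then C m i * (lam m - lam i) * v m $ a
        else if i < j then gam i j * C m j * v m $ a else 0)"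
        unfolding Q_def using inner_sum[OF T i a j vc ev, of lam gam "C m j"] by simp
    qed
    also have "\<dots> = C m i * (lam m - lam i) * v m $ a + (\<Sum>j\<in>{i<..<k}. gam i j * C m j * v m $ a)"
      by (rule sum_split_at[OF i])
    also have "\<dots> = v m $ a * (C m i * (lam m - lam i) + (\<Sum>j\<in>{i<..<k}. gam i j * C m j))"
      by (simp add: algebra_simps sum_distrib_left sum_distrib_right)
    also have "\<dots> = 0" using C3[OF m i] by simp
    finally show "(Q *\<^sub>v col W m) $ r = 0\<^sub>v (k*l) $ r" using r by simp
  qed
  have sub: "set (cols W) \<subseteq> mat_kernel Q"
  proof
    fix w assume "w \<in> set (cols W)"
    then obtain m where m: "m < k" and w: "w = col W m" using Wc
      by (auto simp: cols_def)
    have "col W m \<in> carrier_vec (k*l)" using Wc by (intro carrier_vecI) (simp add: carrier_matD)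
    then show "w \<in> mat_kernel Q" unfolding w by (rule mat_kernelI[OF Qc _ ker[OF m]])
  qed
  have neq: "col W i \<noteq> col W j" if ij: "i < j" "j < k" for i j
  proof
    assume eq: "col W i = col W j"
    have pj: "p j < l" "v j $ p j \<noteq> 0" using p[OF ij(2)] by auto
    have "col W j $ (j*l + p j) = v j $ p j"
      using Wc ij pj idx_lt[OF ij(2) pj(1)] by (simp add: Wentry C1)
    moreover have "col W i $ (j*l + p j) = 0"
      using Wc ij pj idx_lt[OF ij(2) pj(1)] by (simp add: Wentry C2)
    ultimately show False using eq pj by simp
  qed
  have dist: "distinct (cols W)"
    unfolding distinct_conv_nth
  proof (intro allI impI)
    fix i j assume "i < length (cols W)" "j < length (cols W)" "i \<noteq> j"
    then have "i < k" "j < k" "i \<noteq> j" using Wc by auto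
    then have "col W i \<noteq> col W j"
    proof (cases "i < j")
      case True then show ?thesis using neq \<open>j < k\<close> by blast
    next
      case False then have "j < i" using \<open>i \<noteq> j\<close> by simp
      then show ?thesis using neq[of j i] \<open>i < k\<close> by metis
    qed
    then show "cols W ! i \<noteq> cols W ! j" using Wc \<open>i < k\<close> \<open>j < k\<close> by simp
  qed
  have inj: "x = 0\<^sub>v k" if x: "x \<in> carrier_vec k" and Wx: "W *\<^sub>v x = 0\<^sub>v (k*l)" for x
  proof (rule ccontr)
    assume "x \<noteq> 0\<^sub>v k"
    have "\<exists>m0<k. x $ m0 \<noteq> 0"
    proof (rule ccontr)
      assume "\<not> (\<exists>m0<k. x $ m0 \<noteq> 0)"
      then have "x = 0\<^sub>v k" using x by (intro eq_vecI) auto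
      then show False using \<open>x \<noteq> 0\<^sub>v k\<close> by simp
    qed
    then obtain m0 where "m0 < k" "x $ m0 \<noteq> 0" by blast
    define S where "S = {m. m < k \<and> x $ m \<noteq> 0}"
    have S: "finite S" "S \<noteq> {}" using \<open>m0 < k\<close> \<open>x $ m0 \<noteq> 0\<close> unfolding S_def by auto
    define m where "m = Max S"
    have mS: "m \<in> S" unfolding m_def using S by simp
    then have m: "m < k" "x $ m \<noteq> 0" unfolding S_def by auto
    have above: "x $ m' = 0" if "m < m'" "m' < k" for m'
    proof (rule ccontr)
      assume "x $ m' \<noteq> 0"
      then have "m' \<in> S" using that unfolding S_def by auto
      then have "m' \<le> m" unfolding m_def using S by simp
      then show False using that by simp
    qed
    have pm: "p m < l" "v m $ p m \<noteq> 0" using p[OF m(1)] by auto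
    have r: "m*l + p m < k*l" using idx_lt[OF m(1) pm(1)] .
    have "(W *\<^sub>v x) $ (m*l + p m) = (\<Sum>m'<k. W $$ (m*l + p m, m') * x $ m')"
      using Wc x r by (simp add: mult_mat_vec_def scalar_prod_def lessThan_atLeast0)
    also have "\<dots> = (\<Sum>m'<k. if m' = m then v m $ p m * x $ m else 0)"
    proof (rule sum.cong[OF refl])
      fix m' assume m': "m' \<in> {..<k}"
      show "W $$ (m*l + p m, m') * x $ m' = (if m' = m then v m $ p m * x $ m else 0)"
      proof (cases m' m rule: linorder_cases)
        case less then show ?thesis using m' m pm by (simp add: Wentry C2)
      next
        case equal then show ?thesis using m' m pm by (simp add: Wentry C1)
      next
        case greater then show ?thesis using m' m pm above by (simp add: Wentry)
      qed
    qed
    also have "\<dots> = v m $ p m * x $ m" using m by simp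
    finally have "v m $ p m * x $ m = 0" using Wx r by simp
    then show False using m pm by simp
  qed
  have "k \<le> kernel_dim Q" by (rule kernel_dim_ge[OF Qc Wc dist sub inj])
  moreover have "vec_space.rank (k*l) Q + kernel_dim Q = k*l" by (rule rank_nullity_mat[OF Qc])
  ultimately show ?thesis unfolding Q_def by simp
qed


end
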